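(* Let $f:\mathbb{R}^n\to(-\infty,+\infty]$ be a proper closed convex function, let $\mathcal{M}$ be a $C^1$-smooth embedded submanifold containing $\bar x$, and suppose $f$ is $C^1$-partly smooth around $\bar x$ relative to $\mathcal{M}$ with $0\in\operatorname{ri}\partial f(\bar x)$. Then for all $x\in\mathcal{M}$ near $\bar x$, $\|\nabla_{\mathcal{M}}f(x)\|=\operatorname{dist}(0,\partial f(x))$, and moreover $$\liminf_{x\to\bar x,\;x\notin\mathcal{M},\;y\in\partial f(x)}\|y\|>0.$$
   Context: Partial smoothness: $f$ is partly smooth at a point $x\in\mathcal M$ relative to a $C^p$ manifold $\mathcal{M}$ (for all subgradients) if: (Regularity) $\hat\partial f(z)=\partial f(z)\neq\varnothing$ for all $z\in\mathcal{M}$ near $x$; (Restricted smoothness) $f|_{\mathcal{M}}$ is $C^p$-smooth around $x$; (Sharpness) $\operatorname{par}\partial f(x)$ (the subspace parallel to the affine hull of $\partial f(x)$) equals the normal space $N_x\mathcal{M}$; (Inner semicontinuity) for every $y\in\partial f(x)$ and every sequence $x_r\to x$ in $\mathcal{M}$ there exist $y_r\in\partial f(x_r)$ with $y_r\to y$. "$C^1$-partly smooth around $\bar x$ relative to $\mathcal{M}$" means this holds with $p=1$ at every point of $\mathcal M$ near $\bar x$. $\nabla_{\mathcal M}f(x)$ is the Riemannian gradient of $f|_{\mathcal M}$ for the metric induced from $\mathbb{R}^n$, i.e. $P_{T_x\mathcal M}\nabla\tilde f(x)$ for a local smooth extension $\tilde f$. *)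

theory Defs
  imports "HOL-Analysis.Analysis"
begin

text \<open>f : R^n -> (-inf,+inf] is modelled as 'a => ereal with f never -inf.\<close>

definition proper_fun :: "('a \<Rightarrow> ereal) \<Rightarrow> bool" where
  "proper_fun f \<longleftrightarrow> (\<forall>x. f x \<noteq> -\<infinity>) \<and> (\<exists>x. f x \<noteq> \<infinity>)"

definition epigraph :: "('a \<Rightarrow> ereal) \<Rightarrow> ('a \<times> real) set" where
  "epigraph f = {(x, t). f x \<le> ereal t}"

definition convex_fun :: "('a::real_vector \<Rightarrow> ereal) \<Rightarrow> bool" where
  "convex_fun f \<longleftrightarrow> convex (epigraph f)"

definition closed_fun :: "('a::topological_space \<Rightarrow> ereal) \<Rightarrow> bool" where
  "closed_fun f \<longleftrightarrow> closed (epigraph f)"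

definition frechet_subdiff :: "('a::real_inner \<Rightarrow> ereal) \<Rightarrow> 'a \<Rightarrow> 'a set" where
  "frechet_subdiff f x = {y. \<bar>f x\<bar> \<noteq> \<infinity> \<and>
     (\<forall>\<epsilon>>0. \<exists>\<delta>>0. \<forall>z. norm (z - x) < \<delta> \<longrightarrow>
        f z \<ge> f x + ereal (y \<bullet> (z - x) - \<epsilon> * norm (z - x)))}"

definition subdiff :: "('a::real_inner \<Rightarrow> ereal) \<Rightarrow> 'a \<Rightarrow> 'a set" where
  "subdiff f x = {y. \<bar>f x\<bar> \<noteq> \<infinity> \<and>
     (\<exists>X Y. X \<longlonglongrightarrow> x \<and> (\<lambda>k. f (X k)) \<longlonglongrightarrow> f x \<and>
            (\<forall>k. Y k \<in> frechet_subdiff f (X k)) \<and> Y \<longlonglongrightarrow> y)}"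

text \<open>Subspace parallel to the affine hull of S.\<close>
definition par :: "'a::real_vector set \<Rightarrow> 'a set" where
  "par S = span {a - b | a b. a \<in> S \<and> b \<in> S}"

text \<open>M is a C^1 embedded submanifold: around each point of M it is the zero set of a
  C^1 submersion F : U -> W (W a linear subspace of the ambient space, i.e. R^k).\<close>
definition C1_submanifold :: "'a::euclidean_space set \<Rightarrow> bool" where
  "C1_submanifold M \<longleftrightarrow> (\<forall>x\<in>M. \<exists>U (F::'a \<Rightarrow> 'a) F' W.
      open U \<and> x \<in> U \<and> subspace W \<and>
      (\<forall>z\<in>U. (F has_derivative blinfun_apply (F' z)) (at z)) \<and> continuous_on U F' \<and>
      (\<forall>z\<in>U. F z \<in> W) \<and> range (blinfun_apply (F' x)) = W \<and>
      M \<inter> U = {z\<in>U. F z = 0})"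

definition tangent_space :: "'a::euclidean_space set \<Rightarrow> 'a \<Rightarrow> 'a set" where
  "tangent_space M x = {v. \<exists>(\<gamma>::real \<Rightarrow> 'a) e. e > 0 \<and> (\<forall>t\<in>{-e<..<e}. \<gamma> t \<in> M) \<and>
      \<gamma> 0 = x \<and> (\<gamma> has_vector_derivative v) (at 0)}"

definition normal_space :: "'a::euclidean_space set \<Rightarrow> 'a \<Rightarrow> 'a set" where
  "normal_space M x = {w. \<forall>v\<in>tangent_space M x. w \<bullet> v = 0}"

definition C1_on_with_grad :: "'a::euclidean_space set \<Rightarrow> ('a \<Rightarrow> real) \<Rightarrow> ('a \<Rightarrow> 'a) \<Rightarrow> bool" where
  "C1_on_with_grad U ft G \<longleftrightarrow> open U \<and>
     (\<forall>z\<in>U. (ft has_derivative (\<lambda>h. G z \<bullet> h)) (at z)) \<and> continuous_on U G"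

definition local_C1_extension ::
  "('a::euclidean_space \<Rightarrow> ereal) \<Rightarrow> 'a set \<Rightarrow> 'a \<Rightarrow> 'a set \<Rightarrow> ('a \<Rightarrow> real) \<Rightarrow> ('a \<Rightarrow> 'a) \<Rightarrow> bool" where
  "local_C1_extension f M x U ft G \<longleftrightarrow>
     C1_on_with_grad U ft G \<and> x \<in> U \<and> (\<forall>z\<in>M \<inter> U. f z = ereal (ft z))"

text \<open>Riemannian gradient: projection onto T_x M of the gradient of a local C^1 extension
  (independent of the chosen extension).\<close>
definition riem_grad :: "('a::euclidean_space \<Rightarrow> ereal) \<Rightarrow> 'a set \<Rightarrow> 'a \<Rightarrow> 'a" where
  "riem_grad f M x = (SOME g. \<exists>U ft G. local_C1_extension f M x U ft G \<and>
       g = closest_point (tangent_space M x) (G x))"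

definition partly_smooth_at :: "('a::euclidean_space \<Rightarrow> ereal) \<Rightarrow> 'a set \<Rightarrow> 'a \<Rightarrow> bool" where
  "partly_smooth_at f M x \<longleftrightarrow> x \<in> M \<and>
     \<comment> \<open>regularity\<close>
     (\<exists>U. open U \<and> x \<in> U \<and>
        (\<forall>z\<in>M \<inter> U. frechet_subdiff f z = subdiff f z \<and> subdiff f z \<noteq> {})) \<and>
     \<comment> \<open>restricted smoothness\<close>
     (\<exists>U ft G. local_C1_extension f M x U ft G) \<and>
     \<comment> \<open>sharpness\<close>
     par (subdiff f x) = normal_space M x \<and>
     \<comment> \<open>inner semicontinuity\<close>
     (\<forall>y\<in>subdiff f x. \<forall>X. (\<forall>r. X r \<in> M) \<and> X \<longlonglongrightarrow> x \<longrightarrow>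
        (\<exists>Y. (\<forall>\<^sub>F r in sequentially. Y r \<in> subdiff f (X r)) \<and> Y \<longlonglongrightarrow> y))"

definition partly_smooth_around :: "('a::euclidean_space \<Rightarrow> ereal) \<Rightarrow> 'a set \<Rightarrow> 'a \<Rightarrow> bool" where
  "partly_smooth_around f M xb \<longleftrightarrow>
     (\<exists>U. open U \<and> xb \<in> U \<and> (\<forall>x\<in>M \<inter> U. partly_smooth_at f M x))"

end

theory Submission
  imports Defs
begin

definition csd :: "('a::real_inner \<Rightarrow> ereal) \<Rightarrow> 'a \<Rightarrow> 'a set" where
  "csd f x = {y. \<bar>f x\<bar> \<noteq> \<infinity> \<and> (\<forall>w. f w \<ge> f x + ereal (y \<bullet> (w - x)))}"

lemma convex_fun_ineq:
  fixes f :: "'a::real_vector \<Rightarrow> ereal"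
  assumes "convex_fun f" "f a = ereal a'" "f b = ereal b'" "0 \<le> t" "t \<le> 1"
  shows "f ((1 - t) *\<^sub>R a + t *\<^sub>R b) \<le> ereal ((1 - t) * a' + t * b')"
proof -
  have "(a, a') \<in> epigraph f" "(b, b') \<in> epigraph f"
    using assms by (auto simp: epigraph_def)
  then have "(1 - t) *\<^sub>R (a, a') + t *\<^sub>R (b, b') \<in> epigraph f"
    using assms(1) unfolding convex_fun_def convex_def
    by (metis assms(4,5) diff_add_cancel diff_ge_0_iff_ge)
  then show ?thesis by (simp add: epigraph_def)
qed

lemma frechet_global:
  fixes f :: "'a::real_inner \<Rightarrow> ereal"
  assumes cf: "convex_fun f" and nm: "\<And>x. f x \<noteq> -\<infinity>" and y: "y \<in> frechet_subdiff f x"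
  shows "f w \<ge> f x + ereal (y \<bullet> (w - x))"
proof (cases "f w")
  case PInf then show ?thesis by simp
next
  case MInf
  then show ?thesis using nm by simp
next
  case (real b)
  from y obtain a where fa: "f x = ereal a"
    unfolding frechet_subdiff_def by (cases "f x") auto
  show ?thesis
  proof (rule ccontr)
    assume "\<not> ?thesis"
    then have lt: "b < a + y \<bullet> (w - x)" using fa real by simp
    define \<eta> where "\<eta> = a + y \<bullet> (w - x) - b"
    have eta: "\<eta> > 0" using lt by (simp add: \<eta>_def)
    define \<epsilon> where "\<epsilon> = \<eta> / (2 * (norm (w - x) + 1))"
    have pos2: "2 * (norm (w - x) + 1) > 0" using norm_ge_zero by (metis add_nonneg_pos zero_less_one mult_pos_pos zero_less_numeral)
    have eps: "\<epsilon> > 0" using eta pos2 unfolding \<epsilon>_def by (rule divide_pos_pos)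
    obtain \<delta> where d: "\<delta> > 0" and dd: "\<And>z. norm (z - x) < \<delta> \<Longrightarrow>
        f z \<ge> f x + ereal (y \<bullet> (z - x) - \<epsilon> * norm (z - x))"
      using y eps unfolding frechet_subdiff_def by blast
    define t where "t = min 1 (\<delta> / (2 * (norm (w - x) + 1)))"
    have t0: "t > 0" using d pos2 by (simp add: t_def)
    have t1: "t \<le> 1" by (simp add: t_def)
    have "t * norm (w - x) < \<delta>"
    proof -
      have "t * norm (w - x) \<le> (\<delta> / (2 * (norm (w - x) + 1))) * norm (w - x)"
        by (intro mult_right_mono) (auto simp: t_def)
      also have "\<dots> < \<delta>"
        using d by (simp add: field_simps add_pos_nonneg)
      finally show ?thesis .
    qed
    define p where "p = (1 - t) *\<^sub>R x + t *\<^sub>R w"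
    have px: "p - x = t *\<^sub>R (w - x)" by (simp add: p_def algebra_simps)
    have "norm (p - x) < \<delta>" using px t0 \<open>t * norm (w - x) < \<delta>\<close> by simp
    from dd[OF this] have "f p \<ge> ereal (a + (t * (y \<bullet> (w - x)) - \<epsilon> * (t * norm (w - x))))"
      using px t0 fa by simp
    moreover have "f p \<le> ereal ((1 - t) * a + t * b)"
      unfolding p_def using convex_fun_ineq[OF cf fa real] t0 t1 by simp
    ultimately have "a + (t * (y \<bullet> (w - x)) - \<epsilon> * (t * norm (w - x))) \<le> (1 - t) * a + t * b"
      by (metis ereal_less_eq(3) order_trans)
    then have "t * (\<eta> - \<epsilon> * norm (w - x)) \<le> 0"
      by (simp add: \<eta>_def algebra_simps)
    moreover have "\<epsilon> * norm (w - x) \<le> \<eta> / 2"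
    proof -
      have "\<epsilon> * norm (w - x) = \<eta> * (norm (w - x) / (2 * (norm (w - x) + 1)))"
        by (simp add: \<epsilon>_def)
      also have "\<dots> \<le> \<eta> * (1/2)"
      proof (intro mult_left_mono)
        show "norm (w - x) / (2 * (norm (w - x) + 1)) \<le> 1 / 2"
          using pos2 by (simp add: divide_le_eq)
      qed (use eta in auto)
      finally show ?thesis by simp
    qed
    ultimately have "\<eta> - \<epsilon> * norm (w - x) \<le> 0" using t0 by (simp add: mult_le_0_iff)
    then show False using \<open>\<epsilon> * norm (w - x) \<le> \<eta> / 2\<close> eta by linarith
  qed
qed

lemma subdiff_csd:
  fixes f :: "'a::real_inner \<Rightarrow> ereal"
  assumes cf: "convex_fun f" and nm: "\<And>x. f x \<noteq> -\<infinity>"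
  shows "subdiff f x = csd f x"
proof
  show "subdiff f x \<subseteq> csd f x"
  proof
    fix y assume "y \<in> subdiff f x"
    then obtain X Y where fx: "\<bar>f x\<bar> \<noteq> \<infinity>" and X: "X \<longlonglongrightarrow> x"
      and fX: "(\<lambda>k. f (X k)) \<longlonglongrightarrow> f x" and Y: "\<And>k. Y k \<in> frechet_subdiff f (X k)"
      and Yl: "Y \<longlonglongrightarrow> y"
      unfolding subdiff_def mem_Collect_eq by metis
    obtain a where fa: "f x = ereal a" using fx by (cases "f x") auto
    have fin: "\<bar>f (X k)\<bar> \<noteq> \<infinity>" for k using Y[of k] by (simp add: frechet_subdiff_def)
    define r where "r k = real_of_ereal (f (X k))" for k
    have fr: "f (X k) = ereal (r k)" for k using fin[of k] by (cases "f (X k)") (auto simp: r_def)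
    have rl: "r \<longlonglongrightarrow> a"
      using fX unfolding fr fa by (simp add: lim_ereal)
    have "f w \<ge> f x + ereal (y \<bullet> (w - x))" for w
    proof (cases "f w")
      case (real b)
      have "\<And>k. r k + Y k \<bullet> (w - X k) \<le> b"
        using frechet_global[OF cf nm Y, of _ w] unfolding fr real by simp
      moreover have "(\<lambda>k. r k + Y k \<bullet> (w - X k)) \<longlonglongrightarrow> a + y \<bullet> (w - x)"
        by (intro tendsto_intros rl Yl X)
      ultimately have "a + y \<bullet> (w - x) \<le> b"
        by (meson LIMSEQ_le_const2)
      then show ?thesis using fa real by simp
    qed (use nm in auto)
    then show "y \<in> csd f x" using fx by (simp add: csd_def)
  qed
next
  show "csd f x \<subseteq> subdiff f x"
  proof
    fix y assume y: "y \<in> csd f x"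
    then have fx: "\<bar>f x\<bar> \<noteq> \<infinity>" and ineq: "\<And>w. f w \<ge> f x + ereal (y \<bullet> (w - x))"
      by (auto simp: csd_def)
    have "y \<in> frechet_subdiff f x"
      unfolding frechet_subdiff_def
    proof (intro CollectI conjI allI impI fx)
      fix \<epsilon> :: real assume "\<epsilon> > 0"
      have "f x + ereal (y \<bullet> (z - x) - \<epsilon> * norm (z - x)) \<le> f z" for z
      proof -
        have "f x + ereal (y \<bullet> (z - x) - \<epsilon> * norm (z - x)) \<le> f x + ereal (y \<bullet> (z - x))"
          using \<open>\<epsilon> > 0\<close> fx by (cases "f x") auto
        also have "\<dots> \<le> f z" by (rule ineq)
        finally show ?thesis .
      qed
      then show "\<exists>\<delta>>0. \<forall>z. norm (z - x) < \<delta> \<longrightarrow> f x + ereal (y \<bullet> (z - x) - \<epsilon> * norm (z - x)) \<le> f z"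
        by (intro exI[of _ 1]) auto
    qed
    then show "y \<in> subdiff f x"
      unfolding subdiff_def using fx
      by (intro CollectI conjI fx exI[of _ "\<lambda>_. x"] exI[of _ "\<lambda>_. y"]) auto
  qed
qed

lemma csd_convex: "convex (csd f x)"
  unfolding convex_def
proof (intro ballI allI impI)
  fix a b :: 'a and u v :: real
  assume aa: "a \<in> csd f x" and bb: "b \<in> csd f x" and uv: "0 \<le> u" "0 \<le> v" "u + v = 1"
  have fx: "\<bar>f x\<bar> \<noteq> \<infinity>" and a: "\<forall>w. f x + ereal (a \<bullet> (w - x)) \<le> f w"
    and b: "\<forall>w. f x + ereal (b \<bullet> (w - x)) \<le> f w" using aa bb by (auto simp: csd_def)
  obtain c where fc: "f x = ereal c" using fx by (cases "f x") auto
  have "f x + ereal ((u *\<^sub>R a + v *\<^sub>R b) \<bullet> (w - x)) \<le> f w" for w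
  proof (cases "f w")
    case (real d)
    have h: "c + a \<bullet> (w - x) - d \<le> 0" "c + b \<bullet> (w - x) - d \<le> 0" using a b fc real by (auto dest: spec[of _ w])
    have v1: "v = 1 - u" using uv(3) by simp
    have eq: "c + (u *\<^sub>R a + v *\<^sub>R b) \<bullet> (w - x) - d = u * (c + a \<bullet> (w - x) - d) + v * (c + b \<bullet> (w - x) - d)"
      unfolding v1 by (simp add: algebra_simps inner_add_left inner_diff_right inner_diff_left)
    have "u * (c + a \<bullet> (w - x) - d) \<le> 0" "v * (c + b \<bullet> (w - x) - d) \<le> 0"
      using h uv by (auto intro: mult_nonneg_nonpos)
    then have "c + (u *\<^sub>R a + v *\<^sub>R b) \<bullet> (w - x) \<le> d" using eq by linarith
    then show ?thesis using fc real by simp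
  next
    case MInf then show ?thesis using a[rule_format, of w] fc by simp
  next
    case PInf then show ?thesis by simp
  qed
  then show "u *\<^sub>R a + v *\<^sub>R b \<in> csd f x" using fx by (simp add: csd_def)
qed

lemma csd_closed: "closed (csd f x)"
proof (cases "\<bar>f x\<bar> = \<infinity>")
  case True then show ?thesis by (simp add: csd_def)
next
  case False
  then obtain c where fc: "f x = ereal c" by (cases "f x") auto
  have "csd f x = (\<Inter>w. {y. f x + ereal (y \<bullet> (w - x)) \<le> f w})"
    using False by (auto simp: csd_def)
  moreover have "closed {y. f x + ereal (y \<bullet> (w - x)) \<le> f w}" for w
  proof (cases "f w")
    case (real d)
    have "{y. f x + ereal (y \<bullet> (w - x)) \<le> f w} = {y. y \<bullet> (w - x) \<le> d - c}"
      using fc real by auto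
    then show ?thesis using closed_halfspace_le[of "w - x" "d - c"] by (simp add: inner_commute)
  next
    case PInf then show ?thesis by simp
  next
    case MInf
    then have "{y. f x + ereal (y \<bullet> (w - x)) \<le> f w} = {}" using fc by auto
    then show ?thesis by simp
  qed
  ultimately show ?thesis by auto
qed


lemma tangent_orth:
  fixes M :: "'a::euclidean_space set" and \<psi> :: "'a \<Rightarrow> real"
  assumes v: "v \<in> tangent_space M z" and S: "open S" "z \<in> S"
    and d: "(\<psi> has_derivative \<psi>') (at z)" and mn: "\<forall>m\<in>M \<inter> S. \<psi> z \<le> \<psi> m"
  shows "\<psi>' v = 0"
proof -
  obtain \<gamma> e where e: "e > 0" and \<gamma>M: "\<forall>t\<in>{-e<..<e}. \<gamma> t \<in> M" and g0: "\<gamma> 0 = z"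
    and gd: "(\<gamma> has_vector_derivative v) (at 0)"
    using v unfolding tangent_space_def by blast
  have "continuous (at 0) \<gamma>"
    using gd unfolding has_vector_derivative_def by (rule has_derivative_continuous)
  then have "(\<gamma> \<longlongrightarrow> z) (at 0)" using g0 by (simp add: continuous_at)
  then have ev1: "eventually (\<lambda>t. \<gamma> t \<in> S) (at 0)"
    using S by (rule topological_tendstoD)
  have ev2: "eventually (\<lambda>t. \<gamma> t \<in> M) (at (0::real))"
    unfolding eventually_at using e \<gamma>M by (intro exI[of _ e]) (auto simp: dist_real_def abs_less_iff)
  have ev: "eventually (\<lambda>t. (\<psi> \<circ> \<gamma>) 0 \<le> (\<psi> \<circ> \<gamma>) t) (at 0)"
    using eventually_conj[OF ev1 ev2] by eventually_elim (use mn g0 in auto)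
  have "((\<psi> \<circ> \<gamma>) has_vector_derivative \<psi>' v) (at 0)"
    using vector_derivative_diff_chain_within[of \<gamma> v 0 UNIV \<psi> \<psi>'] gd d g0 has_derivative_at_withinI by auto
  then have "((\<psi> \<circ> \<gamma>) has_derivative (\<lambda>t. t *\<^sub>R \<psi>' v)) (at 0)"
    by (simp add: has_vector_derivative_def)
  from has_derivative_local_min[OF this ev] have "(\<lambda>t::real. t *\<^sub>R \<psi>' v) = (\<lambda>h. 0)" .
  then show ?thesis by (metis scaleR_one)
qed

lemma chart:
  fixes M :: "'a::euclidean_space set"
  assumes CM: "C1_submanifold M" and x0M: "x0 \<in> M"
  obtains \<rho> where "\<rho> > 0" "closed (M \<inter> cball x0 \<rho>)"
    "\<And>z. z \<in> M \<inter> ball x0 \<rho> \<Longrightarrow> subspace (tangent_space M z)"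
    "\<And>Z v. (\<And>r. Z r \<in> M) \<Longrightarrow> Z \<longlonglongrightarrow> x0 \<Longrightarrow> v \<in> tangent_space M x0 \<Longrightarrow>
       (\<exists>u. eventually (\<lambda>r. u r \<in> tangent_space M (Z r)) sequentially \<and> u \<longlonglongrightarrow> v)"
proof -
  obtain U and F :: "'a \<Rightarrow> 'a" and F' W where U: "open U" "x0 \<in> U" and W: "subspace W"
    and dF: "\<And>z. z \<in> U \<Longrightarrow> (F has_derivative blinfun_apply (F' z)) (at z)"
    and cF': "continuous_on U F'" and FW: "\<And>z. z \<in> U \<Longrightarrow> F z \<in> W"
    and rW: "range (blinfun_apply (F' x0)) = W" and MU: "M \<inter> U = {z\<in>U. F z = 0}"
  proof -
    have "\<exists>U (F::'a \<Rightarrow> 'a) F' W.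
      open U \<and> x0 \<in> U \<and> subspace W \<and>
      (\<forall>z\<in>U. (F has_derivative blinfun_apply (F' z)) (at z)) \<and> continuous_on U F' \<and>
      (\<forall>z\<in>U. F z \<in> W) \<and> range (blinfun_apply (F' x0)) = W \<and>
      M \<inter> U = {z\<in>U. F z = 0}" using CM x0M unfolding C1_submanifold_def by (rule bspec)
    then show ?thesis by (elim exE conjE) (rule that; assumption?; blast)
  qed
  define A where "A = blinfun_apply (F' x0)"
  have linA: "linear A" unfolding A_def by (rule bounded_linear.linear[OF blinfun.bounded_linear_right])
  define Aa where "Aa = adjoint A"
  have linAa: "linear Aa" unfolding Aa_def using linA by (rule adjoint_linear)
  have Aa_works: "\<And>x y. Aa y \<bullet> x = y \<bullet> A x"
    unfolding Aa_def using linA by (simp add: adjoint_clauses(2))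
  define K where "K = {h. A h = 0}"
  have subK: "subspace K" unfolding K_def using linA by (rule linear_subspace_kernel)
  have AaK: "\<And>y k. k \<in> K \<Longrightarrow> Aa y \<bullet> k = 0"
    using Aa_works by (simp add: K_def)
  have AaW: "\<And>y. y \<in> W \<Longrightarrow> Aa y = 0 \<Longrightarrow> y = 0"
  proof -
    fix y assume "y \<in> W" "Aa y = 0"
    then obtain x where y: "y = A x" using rW A_def by blast
    have "y \<bullet> y = Aa y \<bullet> x" using Aa_works y by simp
    then show "y = 0" using \<open>Aa y = 0\<close> by simp
  qed
  obtain B where BK: "B \<subseteq> K" and Bo: "pairwise orthogonal B" and Bn: "\<And>x. x \<in> B \<Longrightarrow> norm x = 1"
    and Bi: "independent B" and Bs: "span B = K"
    using orthonormal_basis_subspace[OF subK] by metis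
  have finB: "finite B" using Bi independent_bound by blast
  define Q where "Q h = (\<Sum>b\<in>B. (h \<bullet> b) *\<^sub>R b)" for h
  have linQ: "linear Q"
    by (rule linearI) (simp_all add: Q_def inner_add_left scaleR_add_left sum.distrib scaleR_sum_right)
  have QK: "Q h \<in> K" for h
  proof -
    have "Q h \<in> span B" unfolding Q_def by (intro span_sum span_scale span_base) auto
    then show ?thesis using Bs by simp
  qed
  have Qid: "\<And>k. k \<in> K \<Longrightarrow> Q k = k"
    unfolding Q_def using orthonormal_basis_expand[OF Bo Bn _ finB] Bs by auto
  have orthK: "\<And>a b. a \<in> K \<Longrightarrow> (\<And>k. k \<in> K \<Longrightarrow> b \<bullet> k = 0) \<Longrightarrow> a + b \<in> K \<Longrightarrow> b = 0"
  proof -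
    fix a b assume a: "a \<in> K" and b: "\<And>k. k \<in> K \<Longrightarrow> b \<bullet> k = 0" and ab: "a + b \<in> K"
    have "b \<in> K" using subspace_diff[OF subK ab a] by simp
    then show "b = 0" using b[OF \<open>b \<in> K\<close>] by simp
  qed
  define \<Phi> where "\<Phi> z = Aa (F z) + Q (z - x0)" for z
  define \<Phi>' where "\<Phi>' z = (Blinfun Aa o\<^sub>L F' z) + Blinfun Q" for z
  have blAa: "bounded_linear Aa" using linAa by (simp add: linear_conv_bounded_linear)
  have blQ: "bounded_linear Q" using linQ by (simp add: linear_conv_bounded_linear)
  have \<Phi>'_apply: "blinfun_apply (\<Phi>' z) h = Aa (F' z h) + Q h" for z h
    unfolding \<Phi>'_def by (simp add: plus_blinfun.rep_eq bounded_linear_Blinfun_apply[OF blAa] bounded_linear_Blinfun_apply[OF blQ])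
  have dAF: "((\<lambda>z. Aa (F z)) has_derivative (\<lambda>h. Aa (F' z h))) (at z)" if "z \<in> U" for z
    using bounded_linear.has_derivative[OF blAa dF[OF that]] .
  have d\<Phi>: "(\<Phi> has_derivative blinfun_apply (\<Phi>' z)) (at z)" if "z \<in> U" for z
  proof -
    have "((\<lambda>z. Aa (F z)) has_derivative (\<lambda>h. Aa (F' z h))) (at z)"
      using bounded_linear.has_derivative[OF blAa dF[OF that]] .
    moreover have "((\<lambda>z. Q (z - x0)) has_derivative (\<lambda>h. Q h)) (at z)"
      using bounded_linear.has_derivative[OF blQ has_derivative_diff[OF has_derivative_ident has_derivative_const]]
      by simp
    ultimately show ?thesis unfolding \<Phi>_def \<Phi>'_apply[abs_def]
      by (rule has_derivative_add)
  qed
  have c\<Phi>': "continuous_on U \<Phi>'"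
    unfolding \<Phi>'_def by (intro continuous_intros cF')
  have \<Phi>'K: "\<And>z h. z \<in> U \<Longrightarrow> blinfun_apply (\<Phi>' z) h \<in> K \<longleftrightarrow> Aa (F' z h) = 0"
  proof
    fix z h assume "blinfun_apply (\<Phi>' z) h \<in> K"
    then have "Q h + Aa (F' z h) \<in> K" by (simp add: \<Phi>'_apply add.commute)
    then show "Aa (F' z h) = 0" using orthK[OF QK] AaK by blast
  next
    fix z h assume "Aa (F' z h) = 0"
    then show "blinfun_apply (\<Phi>' z) h \<in> K" by (simp add: \<Phi>'_apply QK)
  qed
  have \<Phi>K: "\<And>z. \<Phi> z \<in> K \<longleftrightarrow> Aa (F z) = 0"
  proof
    fix z assume "\<Phi> z \<in> K"
    then have "Q (z - x0) + Aa (F z) \<in> K" by (simp add: \<Phi>_def add.commute)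
    then show "Aa (F z) = 0" using orthK[OF QK] AaK by blast
  next
    fix z assume "Aa (F z) = 0"
    then show "\<Phi> z \<in> K" by (simp add: \<Phi>_def QK)
  qed
  have inM: "\<And>z. z \<in> U \<Longrightarrow> z \<in> M \<longleftrightarrow> \<Phi> z \<in> K"
  proof -
    fix z assume z: "z \<in> U"
    have "z \<in> M \<longleftrightarrow> F z = 0" using MU z by blast
    also have "\<dots> \<longleftrightarrow> Aa (F z) = 0" using AaW[OF FW[OF z]] linAa linear_0 by metis
    finally show "z \<in> M \<longleftrightarrow> \<Phi> z \<in> K" using \<Phi>K by simp
  qed
  have F0: "F x0 = 0" using MU x0M U by blast
  have \<Phi>0: "\<Phi> x0 = 0" unfolding \<Phi>_def F0 using linAa linQ by (simp add: linear_0)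
  have inj0: "inj (blinfun_apply (\<Phi>' x0))"
  proof (subst linear_inj_iff_eq_0, (rule bounded_linear.linear[OF blinfun.bounded_linear_right]), intro allI impI)
    fix h assume h0: "blinfun_apply (\<Phi>' x0) h = 0"
    then have "Aa (A h) + Q h = 0" by (simp add: \<Phi>'_apply A_def)
    then have "Aa (A h) = 0" using orthK[of "Q h" "Aa (A h)"] QK[of h] AaK subspace_0[OF subK]
      by (simp add: add.commute)
    then have "A h \<bullet> A h = 0" using Aa_works[where x=h and y="A h"] by simp
    then have hK: "h \<in> K" by (simp add: K_def)
    then have "Q h = 0" using \<open>Aa (A h) + Q h = 0\<close> \<open>Aa (A h) = 0\<close> by simp
    then show "h = 0" using Qid[OF hK] by simp
  qed
  have lin0: "linear (blinfun_apply (\<Phi>' x0))" by (rule bounded_linear.linear[OF blinfun.bounded_linear_right])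
  obtain ginv where lg: "linear ginv" and gi: "ginv \<circ> blinfun_apply (\<Phi>' x0) = id"
    using linear_injective_left_inverse[OF lin0 inj0] by blast
  have blg: "bounded_linear ginv" using lg by (simp add: linear_conv_bounded_linear)
  have invf: "Blinfun ginv o\<^sub>L \<Phi>' x0 = id_blinfun"
    by (rule blinfun_eqI) (simp add: bounded_linear_Blinfun_apply[OF blg] pointfree_idE[OF gi])
  obtain U' V g g' where oU': "open U'" and U'U: "U' \<subseteq> U" and x0U': "x0 \<in> U'" and oV: "open V"
    and \<Phi>x0V: "\<Phi> x0 \<in> V" and hom: "homeomorphism U' V \<Phi> g"
    and dg: "\<And>y. y \<in> V \<Longrightarrow> (g has_derivative (g' y)) (at y)"
    and g': "\<And>y. y \<in> V \<Longrightarrow> g' y = inv (blinfun_apply (\<Phi>'(g y)))"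
    and bij: "\<And>y. y \<in> V \<Longrightarrow> bij (blinfun_apply (\<Phi>'(g y)))"
    using inverse_function_theorem[OF U(1) d\<Phi> c\<Phi>' U(2) invf] by metis
  have gPhi: "\<And>z. z \<in> U' \<Longrightarrow> g (\<Phi> z) = z" and PhiU': "\<Phi> ` U' = V"
    and Phig: "\<And>y. y \<in> V \<Longrightarrow> \<Phi> (g y) = y" and gV: "g ` V = U'"
    and c\<Phi>: "continuous_on U' \<Phi>"
    using hom unfolding homeomorphism_def by auto
  have Tz: "tangent_space M z = {h. blinfun_apply (\<Phi>' z) h \<in> K}" if z: "z \<in> M" "z \<in> U'" for z
  proof (intro equalityI subsetI CollectI)
    have zU: "z \<in> U" using z U'U by blast
    fix h assume h: "h \<in> tangent_space M z"
    have "Aa (F' z h) \<bullet> e = 0" for e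
    proof (rule tangent_orth[OF h U(1) zU, of "\<lambda>w. Aa (F w) \<bullet> e" "\<lambda>h. Aa (F' z h) \<bullet> e"])
      show "((\<lambda>w. Aa (F w) \<bullet> e) has_derivative (\<lambda>h. Aa (F' z h) \<bullet> e)) (at z)"
        using bounded_linear.has_derivative[OF bounded_linear_inner_left dAF[OF zU]] .
      have "\<And>m. m \<in> M \<inter> U \<Longrightarrow> F m = 0" using MU by blast
      then show "\<forall>m\<in>M \<inter> U. Aa (F z) \<bullet> e \<le> Aa (F m) \<bullet> e"
        using z zU linAa by (simp add: linear_0)
    qed
    then have "Aa (F' z h) = 0" by (metis inner_eq_zero_iff)
    then show "blinfun_apply (\<Phi>' z) h \<in> K" using \<Phi>'K[OF zU] by blast
  next
    have zU: "z \<in> U" using z U'U by blast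
    fix h assume hk0: "h \<in> {h. blinfun_apply (\<Phi>' z) h \<in> K}"
    then have hk: "blinfun_apply (\<Phi>' z) h \<in> K" by simp
    define k where "k = blinfun_apply (\<Phi>' z) h"
    define y0 where "y0 = \<Phi> z"
    have y0V: "y0 \<in> V" using PhiU' z by (auto simp: y0_def)
    have y0K: "y0 \<in> K" using inM[OF zU] z by (simp add: y0_def)
    obtain e where e: "e > 0" "ball y0 e \<subseteq> V" using oV y0V openE by blast
    define c where "c = e / (norm k + 1)"
    have nk1: "norm k + 1 > 0" using norm_ge_zero[of k] by linarith
    have c: "c > 0" unfolding c_def using e(1) nk1 by (rule divide_pos_pos)
    have "norm k / (norm k + 1) < 1" using nk1 by simp
    then have "e * (norm k / (norm k + 1)) < e * 1" using e by (intro mult_strict_left_mono) auto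
    then have "ck": "c * norm k < e" by (simp add: c_def)
    define \<gamma> where "\<gamma> t = g (y0 + t *\<^sub>R k)" for t
    have "\<forall>t\<in>{-c<..<c}. \<gamma> t \<in> M"
    proof
      fix t assume t: "t \<in> {-c<..<c}"
      have "\<bar>t\<bar> * norm k \<le> c * norm k" using t by (intro mult_right_mono) auto
      then have "y0 + t *\<^sub>R k \<in> ball y0 e" using ck by (simp add: dist_norm)
      then have yV: "y0 + t *\<^sub>R k \<in> V" using e by blast
      have yK: "y0 + t *\<^sub>R k \<in> K" using y0K hk subK unfolding k_def
        by (simp add: subspace_add subspace_scale)
      have gU': "\<gamma> t \<in> U'" using gV yV by (auto simp: \<gamma>_def)
      have "\<Phi> (\<gamma> t) \<in> K" using Phig[OF yV] yK by (simp add: \<gamma>_def)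
      then show "\<gamma> t \<in> M" using inM gU' U'U by blast
    qed
    moreover have "\<gamma> 0 = z" using gPhi z by (simp add: \<gamma>_def y0_def)
    moreover have "(\<gamma> has_vector_derivative h) (at 0)"
    proof -
      have line: "((\<lambda>t. y0 + t *\<^sub>R k) has_vector_derivative k) (at 0)"
        unfolding has_vector_derivative_def by (auto intro!: derivative_eq_intros)
      have "((g \<circ> (\<lambda>t. y0 + t *\<^sub>R k)) has_vector_derivative g' y0 k) (at 0)"
        using vector_derivative_diff_chain_within[OF line, of g "g' y0"] dg[OF y0V]
          has_derivative_at_withinI by fastforce
      moreover have "g' y0 k = h"
        using g'[OF y0V] bij[OF y0V] gPhi[OF z(2)] unfolding y0_def k_def
        by (simp add: bij_is_inj)
      ultimately show ?thesis by (simp add: \<gamma>_def[abs_def] o_def)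
    qed
    ultimately show "h \<in> tangent_space M z"
      unfolding tangent_space_def using c by blast
  qed
  obtain \<rho> where \<rho>: "\<rho> > 0" "cball x0 \<rho> \<subseteq> U'" using oU' x0U' open_contains_cball by blast
  show ?thesis
  proof (rule that[OF \<rho>(1)])
    have "M \<inter> cball x0 \<rho> = cball x0 \<rho> \<inter> \<Phi> -` K"
      using \<rho>(2) U'U inM by blast
    moreover have "closed (cball x0 \<rho> \<inter> \<Phi> -` K)"
      using continuous_on_subset[OF c\<Phi> \<rho>(2)] closed_subspace[OF subK]
      by (intro continuous_closed_preimage) auto
    ultimately show "closed (M \<inter> cball x0 \<rho>)" by simp
  next
    fix z assume "z \<in> M \<inter> ball x0 \<rho>"
    then have "z \<in> M" "z \<in> U'" using \<rho>(2) by auto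
    then have "tangent_space M z = blinfun_apply (\<Phi>' z) -` K" using Tz by auto
    then show "subspace (tangent_space M z)"
      using linear_subspace_vimage[OF bounded_linear.linear[OF blinfun.bounded_linear_right] subK] by simp
  next
    fix Z v assume ZM: "\<And>r. Z r \<in> M" and Zl: "Z \<longlonglongrightarrow> x0" and v: "v \<in> tangent_space M x0"
    define k where "k = blinfun_apply (\<Phi>' x0) v"
    have kK: "k \<in> K" using Tz[OF x0M x0U'] v by (simp add: k_def)
    define u where "u r = inv (blinfun_apply (\<Phi>' (Z r))) k" for r
    have evU': "eventually (\<lambda>r. Z r \<in> U') sequentially"
      using Zl oU' x0U' by (rule topological_tendstoD)
    have bijZ: "bij (blinfun_apply (\<Phi>' (Z r)))" if "Z r \<in> U'" for r
      using bij[of "\<Phi> (Z r)"] PhiU' gPhi[OF that] that by auto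
    have uk: "blinfun_apply (\<Phi>' (Z r)) (u r) = k" if "Z r \<in> U'" for r
      using bijZ[OF that] unfolding u_def by (simp add: bij_is_surj surj_f_inv_f)
    have evT: "eventually (\<lambda>r. u r \<in> tangent_space M (Z r)) sequentially"
      using evU' by eventually_elim (use Tz ZM uk kK in auto)
    obtain c where c: "c > 0" "\<And>h. c * norm h \<le> norm (blinfun_apply (\<Phi>' x0) h)"
      using linear_inj_bounded_below_pos[OF lin0 inj0] by blast
    define \<delta> where "\<delta> r = norm (\<Phi>' (Z r) - \<Phi>' x0)" for r
    have "isCont \<Phi>' x0"
      using continuous_on_subset[OF c\<Phi>' U'U] oU' x0U' continuous_on_eq_continuous_at by blast
    then have "(\<lambda>r. \<Phi>' (Z r)) \<longlonglongrightarrow> \<Phi>' x0" using Zl by (rule isCont_tendsto_compose)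
    then have \<delta>0: "\<delta> \<longlonglongrightarrow> 0" unfolding \<delta>_def
      by (intro tendsto_norm_zero) (simp add: LIM_zero)
    have ev\<delta>: "eventually (\<lambda>r. \<delta> r < c / 2) sequentially"
      using order_tendstoD(2)[OF \<delta>0, of "c / 2"] c(1) by simp
    have bound: "eventually (\<lambda>r. norm (u r - v) \<le> (2 / c * norm v) * \<delta> r) sequentially"
      using evU' ev\<delta>
    proof eventually_elim
      case (elim r)
      have "blinfun_apply (\<Phi>' x0) (u r - v) = - blinfun_apply (\<Phi>' (Z r) - \<Phi>' x0) (u r)"
        using uk[OF elim(1)] unfolding k_def
        by (simp add: blinfun.diff_left blinfun.diff_right)
      then have "c * norm (u r - v) \<le> norm (blinfun_apply (\<Phi>' (Z r) - \<Phi>' x0) (u r))"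
        using c(2)[of "u r - v"] by simp
      also have "\<dots> \<le> \<delta> r * norm (u r)" unfolding \<delta>_def by (rule norm_blinfun)
      also have "\<dots> \<le> \<delta> r * (norm (u r - v) + norm v)"
        using norm_triangle_sub[of "u r" v] by (intro mult_left_mono) (auto simp: \<delta>_def)
      finally have "c * norm (u r - v) \<le> \<delta> r * norm (u r - v) + \<delta> r * norm v"
        by (simp add: algebra_simps)
      moreover have "\<delta> r * norm (u r - v) \<le> c / 2 * norm (u r - v)"
        using elim(2) by (intro mult_right_mono) auto
      ultimately have "c / 2 * norm (u r - v) \<le> \<delta> r * norm v" by simp
      then show ?case using c(1) by (simp add: field_simps)
    qed
    have "(\<lambda>r. (2 / c * norm v) * \<delta> r) \<longlonglongrightarrow> 0"
      using tendsto_mult_left[OF \<delta>0, of "2 / c * norm v"] by simp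
    from Lim_null_comparison[OF bound this] have "u \<longlonglongrightarrow> v"
      by (rule LIM_zero_cancel)
    then show "\<exists>u. eventually (\<lambda>r. u r \<in> tangent_space M (Z r)) sequentially \<and> u \<longlonglongrightarrow> v"
      using evT by blast
  qed
qed


lemma normal_limit:
  fixes M :: "'a::euclidean_space set"
  assumes approx: "\<And>Z v. (\<And>r. Z r \<in> M) \<Longrightarrow> Z \<longlonglongrightarrow> x0 \<Longrightarrow> v \<in> tangent_space M x0 \<Longrightarrow>
       (\<exists>u. eventually (\<lambda>r. u r \<in> tangent_space M (Z r)) sequentially \<and> u \<longlonglongrightarrow> v)"
    and ZM: "\<And>r. Z r \<in> M" and Zl: "Z \<longlonglongrightarrow> x0" and El: "E \<longlonglongrightarrow> e"
    and orth: "eventually (\<lambda>r. \<forall>u\<in>tangent_space M (Z r). E r \<bullet> u = 0) sequentially"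
  shows "e \<in> normal_space M x0"
  unfolding normal_space_def
proof (intro CollectI ballI)
  fix v assume v: "v \<in> tangent_space M x0"
  obtain u where ev: "eventually (\<lambda>r. u r \<in> tangent_space M (Z r)) sequentially" and ul: "u \<longlonglongrightarrow> v"
    using approx[OF ZM Zl v] by blast
  have lim: "(\<lambda>r. E r \<bullet> u r) \<longlonglongrightarrow> e \<bullet> v" using El ul by (rule tendsto_inner)
  have "eventually (\<lambda>r. E r \<bullet> u r = 0) sequentially"
    using ev orth by eventually_elim auto
  then have "(\<lambda>r. E r \<bullet> u r) \<longlonglongrightarrow> 0"
    by (rule tendsto_eventually)
  then show "e \<bullet> v = 0" using lim LIMSEQ_unique by blast
qed

lemma ri_contra:
  fixes S :: "'a::euclidean_space set"
  assumes ri: "0 \<in> rel_interior S" and eS: "e \<in> par S" and e0: "e \<noteq> 0"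
    and neg: "\<And>w. w \<in> S \<Longrightarrow> w \<bullet> e \<le> 0"
  shows False
proof -
  obtain r where r: "r > 0" "ball 0 r \<inter> affine hull S \<subseteq> S" and S0: "0 \<in> S"
    using ri unfolding mem_rel_interior_ball by blast
  have "0 \<in> affine hull S" using S0 by (rule hull_inc)
  then have ah: "affine hull S = span S" by (rule affine_hull_span_0)
  have "par S \<subseteq> span S"
    unfolding par_def
  proof (rule span_minimal)
    show "{a - b |a b. a \<in> S \<and> b \<in> S} \<subseteq> span S"
    proof
      fix x assume "x \<in> {a - b |a b. a \<in> S \<and> b \<in> S}"
      then obtain a b where "x = a - b" "a \<in> S" "b \<in> S" by blast
      then show "x \<in> span S" by (simp add: span_diff span_base)
    qed
  qed (rule subspace_span)
  with eS have eS': "e \<in> span S" by blast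
  define t where "t = r / (2 * norm e)"
  have ne: "norm e > 0" using e0 by simp
  have t: "t > 0" unfolding t_def using r(1) ne by simp
  have "norm (t *\<^sub>R e) = r / 2" using ne t r(1) by (simp add: t_def)
  then have "t *\<^sub>R e \<in> ball 0 r" using r(1) by simp
  moreover have "t *\<^sub>R e \<in> affine hull S" unfolding ah using eS' by (rule span_mul)
  ultimately have "t *\<^sub>R e \<in> S" using r(2) by blast
  then have "(t *\<^sub>R e) \<bullet> e \<le> 0" by (rule neg)
  moreover have "(t *\<^sub>R e) \<bullet> e > 0" using t e0 by simp
  ultimately show False by simp
qed

lemma cp_subspace_unique:
  fixes T :: "'a::euclidean_space set"
  assumes T: "subspace T" and p: "p \<in> T" and o: "\<And>u. u \<in> T \<Longrightarrow> (a - p) \<bullet> u = 0"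
  shows "closest_point T a = p"
proof (rule closest_point_unique[symmetric])
  show "convex T" using T by (rule subspace_imp_convex)
  show "closed T" using T by (rule closed_subspace)
  show "p \<in> T" by fact
  show "\<forall>z\<in>T. dist a p \<le> dist a z"
  proof
    fix z assume z: "z \<in> T"
    have pz: "p - z \<in> T" using T p z by (rule subspace_diff)
    have "(dist a z)\<^sup>2 = (norm ((a - p) + (p - z)))\<^sup>2" by (simp add: dist_norm)
    also have "\<dots> = (norm (a - p))\<^sup>2 + (norm (p - z))\<^sup>2"
      using o[OF pz] by (simp only: power2_norm_eq_inner inner_add_left inner_add_right) (simp add: inner_commute)
    finally have "(dist a p)\<^sup>2 \<le> (dist a z)\<^sup>2" by (simp add: dist_norm)
    then show "dist a p \<le> dist a z" by (simp add: power2_le_iff_abs_le)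
  qed
qed

lemma cp_subspace:
  fixes T :: "'a::euclidean_space set"
  assumes T: "subspace T"
  shows "closest_point T a \<in> T" "\<And>u. u \<in> T \<Longrightarrow> (a - closest_point T a) \<bullet> u = 0"
proof -
  have cT: "convex T" "closed T" "T \<noteq> {}"
    using T subspace_imp_convex closed_subspace subspace_0 by blast+
  show pT: "closest_point T a \<in> T" using cT by (simp add: closest_point_in_set)
  fix u assume u: "u \<in> T"
  have "closest_point T a + u \<in> T" "closest_point T a - u \<in> T"
    using T pT u by (auto intro: subspace_add subspace_diff)
  from closest_point_dot[OF cT(1,2) this(1), of a] closest_point_dot[OF cT(1,2) this(2), of a]
  show "(a - closest_point T a) \<bullet> u = 0" by (simp add: inner_diff_right)
qed


lemma inner_chain:
  fixes a b c u :: "'a::real_inner"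
  assumes "(a - b) \<bullet> u = 0" "(b - c) \<bullet> u = 0"
  shows "(a - c) \<bullet> u = 0"
proof -
  have "a - c = (a - b) + (b - c)" by simp
  then have "(a - c) \<bullet> u = (a - b) \<bullet> u + (b - c) \<bullet> u" by (simp only: inner_add_left)
  then show ?thesis using assms by simp
qed

lemma inner_swap:
  fixes a b u :: "'a::real_inner"
  assumes "(a - b) \<bullet> u = 0"
  shows "(b - a) \<bullet> u = 0"
proof -
  have "b - a = - (a - b)" by simp
  then show ?thesis using assms by (simp only: inner_minus_left)
qed

theorem lemma7:
  fixes f :: "'a::euclidean_space \<Rightarrow> ereal" and M :: "'a set" and xb :: 'a
  assumes "proper_fun f" and "convex_fun f" and "closed_fun f"
    and "C1_submanifold M" and "xb \<in> M"
    and "partly_smooth_around f M xb"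
    and "0 \<in> rel_interior (subdiff f xb)"
  shows "(\<exists>U. open U \<and> xb \<in> U \<and>
            (\<forall>x\<in>M \<inter> U. norm (riem_grad f M x) = infdist 0 (subdiff f x)))
       \<and> (\<exists>\<delta>>0. \<exists>\<epsilon>>0. \<forall>x y. norm (x - xb) < \<delta> \<and> x \<notin> M \<and> y \<in> subdiff f x
                                \<longrightarrow> norm y \<ge> \<epsilon>)"
proof -
  note cf = assms(2) and CM = assms(4) and xbM = assms(5) and ri = assms(7)
  have nm: "\<And>x. f x \<noteq> -\<infinity>" using assms(1) by (simp add: proper_fun_def)
  have sd: "\<And>x. subdiff f x = csd f x" using subdiff_csd[OF cf nm] .
  have sdI: "f w \<ge> f z + ereal (y \<bullet> (w - z))" if "y \<in> subdiff f z" for y z w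
    using that sd by (simp add: csd_def)
  have sdF: "\<bar>f z\<bar> \<noteq> \<infinity>" if "y \<in> subdiff f z" for y z
    using that sd by (simp add: csd_def)
  obtain U0 where "open U0" "xb \<in> U0" "\<forall>x\<in>M \<inter> U0. partly_smooth_at f M x"
    using assms(6) unfolding partly_smooth_around_def by blast
  then have ps: "partly_smooth_at f M xb" using xbM by blast
  have psu: "xb \<in> M \<and>
     (\<exists>U. open U \<and> xb \<in> U \<and>
        (\<forall>z\<in>M \<inter> U. frechet_subdiff f z = subdiff f z \<and> subdiff f z \<noteq> {})) \<and>
     (\<exists>U ft G. local_C1_extension f M xb U ft G) \<and>
     par (subdiff f xb) = normal_space M xb \<and>
     (\<forall>y\<in>subdiff f xb. \<forall>X. (\<forall>r. X r \<in> M) \<and> X \<longlonglongrightarrow> xb \<longrightarrow>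
        (\<exists>Y. (\<forall>\<^sub>F r in sequentially. Y r \<in> subdiff f (X r)) \<and> Y \<longlonglongrightarrow> y))"
    using ps[unfolded partly_smooth_at_def] .
  note psu = psu[THEN conjunct2]
  obtain U1 where U1: "open U1" "xb \<in> U1" and reg0: "\<forall>z\<in>M \<inter> U1. frechet_subdiff f z = subdiff f z \<and> subdiff f z \<noteq> {}"
    using psu[THEN conjunct1] by blast
  have reg: "\<And>z. z \<in> M \<inter> U1 \<Longrightarrow> subdiff f z \<noteq> {}" using reg0 by blast
  obtain U2 ft G where ext: "local_C1_extension f M xb U2 ft G"
    using psu[THEN conjunct2, THEN conjunct1] by blast
  have sharp: "par (subdiff f xb) = normal_space M xb"
    using psu[THEN conjunct2, THEN conjunct2, THEN conjunct1] .
  have isc0: "\<forall>y\<in>subdiff f xb. \<forall>X. (\<forall>r. X r \<in> M) \<and> X \<longlonglongrightarrow> xb \<longrightarrow>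
        (\<exists>Y. (\<forall>\<^sub>F r in sequentially. Y r \<in> subdiff f (X r)) \<and> Y \<longlonglongrightarrow> y)"
    using psu[THEN conjunct2, THEN conjunct2, THEN conjunct2] .
  have isc: "\<And>y X. y \<in> subdiff f xb \<Longrightarrow> (\<forall>r. X r \<in> M) \<Longrightarrow> X \<longlonglongrightarrow> xb \<Longrightarrow>
        (\<exists>Y. (\<forall>\<^sub>F r in sequentially. Y r \<in> subdiff f (X r)) \<and> Y \<longlonglongrightarrow> y)"
    using isc0 by blast
  have U2: "open U2" "xb \<in> U2" and dft: "\<And>z. z \<in> U2 \<Longrightarrow> (ft has_derivative (\<lambda>h. G z \<bullet> h)) (at z)"
    and fft: "\<And>z. z \<in> M \<inter> U2 \<Longrightarrow> f z = ereal (ft z)"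
    using ext unfolding local_C1_extension_def C1_on_with_grad_def by auto
  obtain \<rho> where \<rho>: "\<rho> > 0" and clC: "closed (M \<inter> cball xb \<rho>)"
    and Tsub: "\<And>z. z \<in> M \<inter> ball xb \<rho> \<Longrightarrow> subspace (tangent_space M z)"
    and approx: "\<And>Z v. (\<And>r. Z r \<in> M) \<Longrightarrow> Z \<longlonglongrightarrow> xb \<Longrightarrow> v \<in> tangent_space M xb \<Longrightarrow>
       (\<exists>u. eventually (\<lambda>r. u r \<in> tangent_space M (Z r)) sequentially \<and> u \<longlonglongrightarrow> v)"
    by (rule chart[OF CM xbM], rule that) blast+
  have final: False if ZM: "\<And>r. Z r \<in> M" and Zl: "Z \<longlonglongrightarrow> xb" and El: "E \<longlonglongrightarrow> e" and e1: "norm e = 1"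
    and orth: "eventually (\<lambda>r. \<forall>u\<in>tangent_space M (Z r). E r \<bullet> u = 0) sequentially"
    and negW: "\<And>W w. (\<forall>\<^sub>F r in sequentially. W r \<in> subdiff f (Z r)) \<Longrightarrow> W \<longlonglongrightarrow> w \<Longrightarrow> w \<bullet> e \<le> 0"
    for Z E e
  proof -
    have "e \<in> normal_space M xb" using normal_limit[OF approx ZM Zl El orth] .
    then have eP: "e \<in> par (subdiff f xb)" using sharp by simp
    show False
    proof (rule ri_contra[OF ri eP])
      show "e \<noteq> 0" using e1 by auto
      fix w assume "w \<in> subdiff f xb"
      from isc[OF this] ZM Zl obtain W where "\<forall>\<^sub>F r in sequentially. W r \<in> subdiff f (Z r)" "W \<longlonglongrightarrow> w"
        by blast
      then show "w \<bullet> e \<le> 0" by (rule negW)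
    qed
  qed
  have P2: "\<exists>\<delta>>0. \<exists>\<epsilon>>0. \<forall>x y. norm (x - xb) < \<delta> \<and> x \<notin> M \<and> y \<in> subdiff f x
                                \<longrightarrow> norm y \<ge> \<epsilon>"
  proof (rule ccontr)
    assume H: "\<not> (\<exists>\<delta>>0. \<exists>\<epsilon>>0. \<forall>x y. norm (x - xb) < \<delta> \<and> x \<notin> M \<and> y \<in> subdiff f x
                                \<longrightarrow> norm y \<ge> \<epsilon>)"
    have "\<forall>n. \<exists>x y. norm (x - xb) < inverse (real (Suc n)) \<and> x \<notin> M \<and> y \<in> subdiff f x \<and>
              norm y < inverse (real (Suc n))"
    proof
      fix n
      have pos: "inverse (real (Suc n)) > 0" by simp
      have "\<not> (\<forall>x y. norm (x - xb) < inverse (real (Suc n)) \<and> x \<notin> M \<and> y \<in> subdiff f x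
                                \<longrightarrow> norm y \<ge> inverse (real (Suc n)))"
      proof
        assume A: "\<forall>x y. norm (x - xb) < inverse (real (Suc n)) \<and> x \<notin> M \<and> y \<in> subdiff f x
                                \<longrightarrow> norm y \<ge> inverse (real (Suc n))"
        have "\<exists>\<delta>>0. \<exists>\<epsilon>>0. \<forall>x y. norm (x - xb) < \<delta> \<and> x \<notin> M \<and> y \<in> subdiff f x
                                \<longrightarrow> norm y \<ge> \<epsilon>"
          by (rule exI[of _ "inverse (real (Suc n))"], rule conjI[OF pos],
              rule exI[of _ "inverse (real (Suc n))"], rule conjI[OF pos]) (rule A)
        then show False using H by contradiction
      qed
      then show "\<exists>x y. norm (x - xb) < inverse (real (Suc n)) \<and> x \<notin> M \<and> y \<in> subdiff f x \<and>
              norm y < inverse (real (Suc n))"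
        by (simp add: not_le)
    qed
    then have "\<exists>X. \<forall>n. \<exists>y. norm (X n - xb) < inverse (real (Suc n)) \<and> X n \<notin> M \<and> y \<in> subdiff f (X n) \<and>
              norm y < inverse (real (Suc n))" by (rule choice)
    then obtain X where "\<forall>n. \<exists>y. norm (X n - xb) < inverse (real (Suc n)) \<and> X n \<notin> M \<and> y \<in> subdiff f (X n) \<and>
              norm y < inverse (real (Suc n))" by (rule exE)
    then have "\<exists>Y. \<forall>n. norm (X n - xb) < inverse (real (Suc n)) \<and> X n \<notin> M \<and> Y n \<in> subdiff f (X n) \<and>
              norm (Y n) < inverse (real (Suc n))" by (rule choice)
    then obtain Y where XY0: "\<forall>n. norm (X n - xb) < inverse (real (Suc n)) \<and> X n \<notin> M \<and> Y n \<in> subdiff f (X n) \<and>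
              norm (Y n) < inverse (real (Suc n))" by (rule exE)
    have XY: "\<And>n. norm (X n - xb) < inverse (real (Suc n)) \<and> X n \<notin> M \<and>
        Y n \<in> subdiff f (X n) \<and> norm (Y n) < inverse (real (Suc n))" using XY0 by blast
    have Xl: "X \<longlonglongrightarrow> xb"
    proof (rule LIM_zero_cancel, rule Lim_null_comparison)
      show "\<forall>\<^sub>F n in sequentially. norm (X n - xb) \<le> inverse (real (Suc n))"
        using XY by (simp add: less_imp_le)
    qed (rule LIMSEQ_inverse_real_of_nat)
    have Yl: "Y \<longlonglongrightarrow> 0"
    proof (rule Lim_null_comparison)
      show "\<forall>\<^sub>F n in sequentially. norm (Y n) \<le> inverse (real (Suc n))"
        using XY by (simp add: less_imp_le)
    qed (rule LIMSEQ_inverse_real_of_nat)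
    define C where "C = M \<inter> cball xb \<rho>"
    have xbC: "xb \<in> C" using xbM \<rho> by (simp add: C_def)
    have clC': "closed C" using clC by (simp add: C_def)
    define Z where "Z n = closest_point C (X n)" for n
    have ZC: "Z n \<in> C" for n unfolding Z_def using clC' xbC by (auto intro: closest_point_in_set)
    have ZM: "Z n \<in> M" for n using ZC by (simp add: C_def)
    have Zle: "dist (X n) (Z n) \<le> dist (X n) xb" for n
      unfolding Z_def using clC' xbC by (rule closest_point_le)
    have Zl: "Z \<longlonglongrightarrow> xb"
    proof (rule LIM_zero_cancel, rule Lim_null_comparison)
      show "\<forall>\<^sub>F n in sequentially. norm (Z n - xb) \<le> 2 * inverse (real (Suc n))"
      proof (intro always_eventually allI)
        fix n
        have "norm (Z n - xb) \<le> dist (X n) (Z n) + dist (X n) xb"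
          by (metis dist_norm dist_triangle2 dist_commute)
        also have "\<dots> \<le> 2 * dist (X n) xb" using Zle[of n] by simp
        also have "\<dots> \<le> 2 * inverse (real (Suc n))" using XY[of n] by (simp add: dist_norm)
        finally show "norm (Z n - xb) \<le> 2 * inverse (real (Suc n))" .
      qed
      show "(\<lambda>n. 2 * inverse (real (Suc n))) \<longlonglongrightarrow> 0"
        using tendsto_mult_right_zero[OF LIMSEQ_inverse_real_of_nat, of 2] by simp
    qed
    have XZ: "X n \<noteq> Z n" for n using XY[of n] ZM[of n] by auto
    define D where "D n = (X n - Z n) /\<^sub>R norm (X n - Z n)" for n
    have Dsph: "D n \<in> sphere 0 1" for n using XZ[of n] by (simp add: D_def)
    obtain d \<sigma> where d: "d \<in> sphere 0 1" and \<sigma>: "strict_mono \<sigma>" and Dl: "(D \<circ> \<sigma>) \<longlonglongrightarrow> d"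
      by (rule seq_compactE[OF compact_imp_seq_compact[OF compact_sphere] allI[OF Dsph]])
    have Zl': "(Z \<circ> \<sigma>) \<longlonglongrightarrow> xb" using Zl \<sigma> by (rule LIMSEQ_subseq_LIMSEQ)
    have Yl': "(Y \<circ> \<sigma>) \<longlonglongrightarrow> 0" using Yl \<sigma> by (rule LIMSEQ_subseq_LIMSEQ)
    show False
    proof (rule final[of "Z \<circ> \<sigma>" "D \<circ> \<sigma>" d])
      show "(Z \<circ> \<sigma>) r \<in> M" for r using ZM by simp
      show "(Z \<circ> \<sigma>) \<longlonglongrightarrow> xb" by fact
      show "(D \<circ> \<sigma>) \<longlonglongrightarrow> d" by fact
      show "norm d = 1" using d by simp
      have evb: "eventually (\<lambda>r. (Z \<circ> \<sigma>) r \<in> ball xb \<rho>) sequentially"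
        using Zl' open_ball centre_in_ball[THEN iffD2, OF \<rho>] by (rule topological_tendstoD)
      then show "eventually (\<lambda>r. \<forall>u\<in>tangent_space M ((Z \<circ> \<sigma>) r). (D \<circ> \<sigma>) r \<bullet> u = 0) sequentially"
      proof eventually_elim
        case (elim r)
        define a where "a = X (\<sigma> r)"
        define z where "z = Z (\<sigma> r)"
        have zb: "z \<in> ball xb \<rho>" using elim by (simp add: z_def)
        show ?case
        proof
          fix u assume u: "u \<in> tangent_space M ((Z \<circ> \<sigma>) r)"
          then have u': "u \<in> tangent_space M z" by (simp add: z_def)
          have dpsi: "((\<lambda>w. (a - w) \<bullet> (a - w)) has_derivative
                (\<lambda>h. (a - z) \<bullet> (0 - h) + (0 - h) \<bullet> (a - z))) (at z)"
            using has_derivative_inner[OF has_derivative_diff[OF has_derivative_const has_derivative_ident]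
                has_derivative_diff[OF has_derivative_const has_derivative_ident]] by simp
          have mn: "\<forall>m\<in>M \<inter> ball xb \<rho>. (a - z) \<bullet> (a - z) \<le> (a - m) \<bullet> (a - m)"
          proof
            fix m assume "m \<in> M \<inter> ball xb \<rho>"
            then have "m \<in> C" by (auto simp: C_def)
            then have "dist a z \<le> dist a m" unfolding z_def Z_def a_def using clC' by (intro closest_point_le)
            then have "(dist a z)\<^sup>2 \<le> (dist a m)\<^sup>2" by (simp add: power_mono)
            then show "(a - z) \<bullet> (a - z) \<le> (a - m) \<bullet> (a - m)" by (simp add: dot_square_norm dist_norm)
          qed
          have "(a - z) \<bullet> (0 - u) + (0 - u) \<bullet> (a - z) = 0"
            using tangent_orth[OF u' open_ball zb dpsi mn] .
          then have "(a - z) \<bullet> u = 0" by (simp add: inner_commute)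
          then show "(D \<circ> \<sigma>) r \<bullet> u = 0" by (simp add: D_def a_def z_def)
        qed
      qed
      fix W w assume evW: "\<forall>\<^sub>F r in sequentially. W r \<in> subdiff f ((Z \<circ> \<sigma>) r)" and Wl: "W \<longlonglongrightarrow> w"
      have ev: "eventually (\<lambda>r. W r \<bullet> (D \<circ> \<sigma>) r \<le> (Y \<circ> \<sigma>) r \<bullet> (D \<circ> \<sigma>) r) sequentially"
        using evW
      proof eventually_elim
        case (elim r)
        define a where "a = X (\<sigma> r)"
        define z where "z = Z (\<sigma> r)"
        define y where "y = Y (\<sigma> r)"
        have Wz: "W r \<in> subdiff f z" using elim by (simp add: z_def)
        have ya: "y \<in> subdiff f a" using XY by (simp add: y_def a_def)
        obtain A where fA: "f a = ereal A" using sdF[OF ya] by (cases "f a") auto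
        obtain B where fB: "f z = ereal B" using sdF[OF Wz] by (cases "f z") auto
        have "B \<ge> A + y \<bullet> (z - a)" using sdI[OF ya, of z] fA fB by simp
        moreover have "A \<ge> B + W r \<bullet> (a - z)" using sdI[OF Wz, of a] fA fB by simp
        ultimately have "W r \<bullet> (a - z) \<le> y \<bullet> (a - z)"
          by (simp add: inner_diff_right algebra_simps)
        then have "W r \<bullet> (a - z) / norm (a - z) \<le> y \<bullet> (a - z) / norm (a - z)"
          by (simp add: divide_right_mono)
        then show ?case by (simp add: D_def a_def z_def y_def divide_inverse mult.commute)
      qed
      have l1: "(\<lambda>r. W r \<bullet> (D \<circ> \<sigma>) r) \<longlonglongrightarrow> w \<bullet> d" using Wl Dl by (rule tendsto_inner)
      have l2: "(\<lambda>r. (Y \<circ> \<sigma>) r \<bullet> (D \<circ> \<sigma>) r) \<longlonglongrightarrow> 0 \<bullet> d" using Yl' Dl by (rule tendsto_inner)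
      have "w \<bullet> d \<le> 0 \<bullet> d" using l1 l2 ev by (intro tendsto_le[OF trivial_limit_sequentially]) 
      then show "w \<bullet> d \<le> 0" by simp
    qed
  qed
  define U where "U = U1 \<inter> U2 \<inter> ball xb \<rho>"
  have oU: "open U" using U1 U2 by (simp add: U_def open_Int)
  have xbU: "xb \<in> U" using U1 U2 \<rho> by (simp add: U_def)
  have TzS: "subspace (tangent_space M z)" if "z \<in> M \<inter> U" for z
    using Tsub that by (simp add: U_def)
  have Bfact: "(y - G z) \<bullet> u = 0" if z: "z \<in> M \<inter> U" and y: "y \<in> subdiff f z"
    and u: "u \<in> tangent_space M z" for z y u
  proof -
    have zU2: "z \<in> U2" using z by (simp add: U_def)
    have d2: "((\<lambda>w. y \<bullet> (w - z)) has_derivative (\<lambda>h. y \<bullet> h)) (at z)"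
      using bounded_linear.has_derivative[OF bounded_linear_inner_right[of y]
          has_derivative_diff[OF has_derivative_ident has_derivative_const]] by simp
    have "G z \<bullet> u - y \<bullet> u = 0"
    proof (rule tangent_orth[OF u U2(1) zU2, of "\<lambda>w. ft w - y \<bullet> (w - z)" "\<lambda>h. G z \<bullet> h - y \<bullet> h"])
      show "((\<lambda>w. ft w - y \<bullet> (w - z)) has_derivative (\<lambda>h. G z \<bullet> h - y \<bullet> h)) (at z)"
        using has_derivative_diff[OF dft[OF zU2] d2] .
      show "\<forall>m\<in>M \<inter> U2. ft z - y \<bullet> (z - z) \<le> ft m - y \<bullet> (m - z)"
      proof
        fix m assume m: "m \<in> M \<inter> U2"
        have "f m \<ge> f z + ereal (y \<bullet> (m - z))" by (rule sdI[OF y])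
        then have "ereal (ft m) \<ge> ereal (ft z) + ereal (y \<bullet> (m - z))"
          using fft[OF m] fft[of z] z zU2 by simp
        then show "ft z - y \<bullet> (z - z) \<le> ft m - y \<bullet> (m - z)" by simp
      qed
    qed
    then show ?thesis by (simp add: inner_diff_left)
  qed
  define P where "P z = closest_point (tangent_space M z) (G z)" for z
  have PT: "P z \<in> tangent_space M z" and Porth: "\<And>u. u \<in> tangent_space M z \<Longrightarrow> (G z - P z) \<bullet> u = 0"
    if "z \<in> M \<inter> U" for z
    using cp_subspace[OF TzS[OF that]] by (simp_all add: P_def)
  have Rfact: "riem_grad f M z = P z" if z: "z \<in> M \<inter> U" for z
    unfolding riem_grad_def
  proof (rule some_equality)
    have zU2: "z \<in> U2" using z by (simp add: U_def)
    have "local_C1_extension f M z U2 ft G"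
      using ext zU2 unfolding local_C1_extension_def by blast
    then show "\<exists>U ft G. local_C1_extension f M z U ft G \<and> P z = closest_point (tangent_space M z) (G z)"
      by (auto simp: P_def)
    fix g assume "\<exists>U ft G. local_C1_extension f M z U ft G \<and> g = closest_point (tangent_space M z) (G z)"
    then obtain U3 ft3 G3 where ext3: "local_C1_extension f M z U3 ft3 G3"
      and g: "g = closest_point (tangent_space M z) (G3 z)" by blast
    have U3: "open U3" "z \<in> U3" and dft3: "\<And>w. w \<in> U3 \<Longrightarrow> (ft3 has_derivative (\<lambda>h. G3 w \<bullet> h)) (at w)"
      and fft3: "\<And>w. w \<in> M \<inter> U3 \<Longrightarrow> f w = ereal (ft3 w)"
      using ext3 unfolding local_C1_extension_def C1_on_with_grad_def by auto
    show "g = P z" unfolding g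
    proof (rule cp_subspace_unique[OF TzS[OF z] PT[OF z]])
      fix u assume u: "u \<in> tangent_space M z"
      have "G3 z \<bullet> u - G z \<bullet> u = 0"
      proof (rule tangent_orth[OF u open_Int[OF U3(1) U2(1)], of "\<lambda>w. ft3 w - ft w"])
        show "z \<in> U3 \<inter> U2" using U3 zU2 by simp
        show "((\<lambda>w. ft3 w - ft w) has_derivative (\<lambda>h. G3 z \<bullet> h - G z \<bullet> h)) (at z)"
          using has_derivative_diff[OF dft3[OF U3(2)] dft[OF zU2]] .
        have eq: "ft3 m = ft m" if "m \<in> M \<inter> (U3 \<inter> U2)" for m
          using fft3[of m] fft[of m] that by auto
        show "\<forall>m\<in>M \<inter> (U3 \<inter> U2). ft3 z - ft z \<le> ft3 m - ft m"
          using eq[of z] eq z U3 zU2 by auto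
      qed
      then have "(G3 z - G z) \<bullet> u = 0" by (simp add: inner_diff_left)
      moreover have "(G z - P z) \<bullet> u = 0" using Porth[OF z u] .
      ultimately show "(G3 z - P z) \<bullet> u = 0" by (rule inner_chain)
    qed
  qed
  have Ifact: "infdist 0 (subdiff f z) = norm (P z)" if z: "z \<in> M \<inter> U" and Pin: "P z \<in> subdiff f z" for z
  proof (rule antisym)
    show "infdist 0 (subdiff f z) \<le> norm (P z)" using infdist_le[OF Pin, of 0] by simp
    have ne: "subdiff f z \<noteq> {}" using Pin by blast
    show "norm (P z) \<le> infdist 0 (subdiff f z)"
      unfolding infdist_notempty[OF ne]
    proof (rule cINF_greatest[OF ne])
      fix y assume y: "y \<in> subdiff f z"
      have "(y - P z) \<bullet> P z = 0"
      proof -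
        have "(y - G z) \<bullet> P z = 0" using Bfact[OF z y PT[OF z]] .
        moreover have "(G z - P z) \<bullet> P z = 0" using Porth[OF z PT[OF z]] .
        ultimately show ?thesis by (rule inner_chain)
      qed
      then have "y \<bullet> y = P z \<bullet> P z + (y - P z) \<bullet> (y - P z)"
        by (simp add: inner_diff_left inner_diff_right inner_commute)
      then have "P z \<bullet> P z \<le> y \<bullet> y" by simp
      then show "norm (P z) \<le> dist 0 y" by (simp add: norm_le)
    qed
  qed
  have P1: "\<exists>U. open U \<and> xb \<in> U \<and>
            (\<forall>x\<in>M \<inter> U. norm (riem_grad f M x) = infdist 0 (subdiff f x))"
  proof (rule ccontr)
    assume H: "\<not> (\<exists>U. open U \<and> xb \<in> U \<and>
            (\<forall>x\<in>M \<inter> U. norm (riem_grad f M x) = infdist 0 (subdiff f x)))"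
    have "\<forall>n. \<exists>z. z \<in> M \<inter> U \<and> norm (z - xb) < inverse (real (Suc n)) \<and> P z \<notin> subdiff f z"
    proof
      fix n
      define V where "V = U \<inter> ball xb (inverse (real (Suc n)))"
      have "open V" "xb \<in> V" using oU xbU by (auto simp: V_def)
      then have "\<not> (\<forall>x\<in>M \<inter> V. norm (riem_grad f M x) = infdist 0 (subdiff f x))"
        using H by blast
      then obtain z where z: "z \<in> M \<inter> V" and bad: "norm (riem_grad f M z) \<noteq> infdist 0 (subdiff f z)"
        by blast
      have zU: "z \<in> M \<inter> U" using z by (simp add: V_def)
      have "P z \<notin> subdiff f z" using bad Rfact[OF zU] Ifact[OF zU] by auto
      moreover have "norm (z - xb) < inverse (real (Suc n))" using z by (simp add: V_def dist_norm norm_minus_commute)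
      ultimately show "\<exists>z. z \<in> M \<inter> U \<and> norm (z - xb) < inverse (real (Suc n)) \<and> P z \<notin> subdiff f z"
        using zU by blast
    qed
    then obtain Z where Z0: "\<forall>n. Z n \<in> M \<inter> U \<and> norm (Z n - xb) < inverse (real (Suc n)) \<and> P (Z n) \<notin> subdiff f (Z n)"
      by (rule choice[THEN exE])
    have ZU: "Z n \<in> M \<inter> U" and Zd: "norm (Z n - xb) < inverse (real (Suc n))"
      and Zbad: "P (Z n) \<notin> subdiff f (Z n)" for n using Z0 by blast+
    have Zl: "Z \<longlonglongrightarrow> xb"
    proof (rule LIM_zero_cancel, rule Lim_null_comparison)
      show "\<forall>\<^sub>F n in sequentially. norm (Z n - xb) \<le> inverse (real (Suc n))"
        using Zd by (simp add: less_imp_le)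
    qed (rule LIMSEQ_inverse_real_of_nat)
    define p where "p n = P (Z n)" for n
    define q where "q n = closest_point (subdiff f (Z n)) (p n)" for n
    have Sne: "subdiff f (Z n) \<noteq> {}" for n using reg ZU[of n] by (simp add: U_def)
    have Scl: "closed (subdiff f (Z n))" and Scv: "convex (subdiff f (Z n))" for n
      using sd csd_closed csd_convex by simp_all
    have qS: "q n \<in> subdiff f (Z n)" for n
      unfolding q_def using Scl Sne by (rule closest_point_in_set)
    have pq: "p n \<noteq> q n" for n using qS[of n] Zbad[of n] by (auto simp: p_def)
    define E where "E n = (p n - q n) /\<^sub>R norm (p n - q n)" for n
    have Esph: "E n \<in> sphere 0 1" for n using pq[of n] by (simp add: E_def)
    obtain e \<sigma> where e: "e \<in> sphere 0 1" and \<sigma>: "strict_mono \<sigma>" and El: "(E \<circ> \<sigma>) \<longlonglongrightarrow> e"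
      by (rule seq_compactE[OF compact_imp_seq_compact[OF compact_sphere] allI[OF Esph]])
    have pqorth: "(p n - q n) \<bullet> u = 0" if "u \<in> tangent_space M (Z n)" for n u
    proof -
      have "(q n - G (Z n)) \<bullet> u = 0" using Bfact[OF ZU qS that] .
      moreover have "(G (Z n) - p n) \<bullet> u = 0" using Porth[OF ZU that] by (simp add: p_def)
      ultimately show ?thesis using inner_chain[OF inner_swap inner_swap] by blast
    qed
    show False
    proof (rule final[of "Z \<circ> \<sigma>" "E \<circ> \<sigma>" e])
      show "(Z \<circ> \<sigma>) r \<in> M" for r using ZU by simp
      show "(Z \<circ> \<sigma>) \<longlonglongrightarrow> xb" using Zl \<sigma> by (rule LIMSEQ_subseq_LIMSEQ)
      show "(E \<circ> \<sigma>) \<longlonglongrightarrow> e" by fact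
      show "norm e = 1" using e by simp
      show "eventually (\<lambda>r. \<forall>u\<in>tangent_space M ((Z \<circ> \<sigma>) r). (E \<circ> \<sigma>) r \<bullet> u = 0) sequentially"
        by (intro always_eventually allI ballI) (simp add: E_def pqorth)
      fix W w assume evW: "\<forall>\<^sub>F r in sequentially. W r \<in> subdiff f ((Z \<circ> \<sigma>) r)" and Wl: "W \<longlonglongrightarrow> w"
      have ev: "eventually (\<lambda>r. W r \<bullet> (E \<circ> \<sigma>) r \<le> 0) sequentially"
        using evW
      proof eventually_elim
        case (elim r)
        define n where "n = \<sigma> r"
        have Wn: "W r \<in> subdiff f (Z n)" using elim by (simp add: n_def)
        have "(p n - q n) \<bullet> (W r - q n) \<le> 0"
          unfolding q_def using Scv Scl Wn by (rule closest_point_dot)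
        moreover have "(p n - q n) \<bullet> p n = 0" using pqorth PT[OF ZU] by (simp add: p_def)
        ultimately have "(p n - q n) \<bullet> W r \<le> (p n - q n) \<bullet> q n - 0" by (simp add: inner_diff_right)
        also have "\<dots> = - ((p n - q n) \<bullet> (p n - q n))"
          using \<open>(p n - q n) \<bullet> p n = 0\<close> by (simp add: inner_diff_right)
        also have "\<dots> \<le> 0" by simp
        finally have "W r \<bullet> (p n - q n) \<le> 0" by (simp add: inner_commute)
        then have "W r \<bullet> (p n - q n) / norm (p n - q n) \<le> 0" by (simp add: divide_nonpos_nonneg)
        then show ?case by (simp add: E_def n_def divide_inverse mult.commute)
      qed
      have "(\<lambda>r. W r \<bullet> (E \<circ> \<sigma>) r) \<longlonglongrightarrow> w \<bullet> e" using Wl El by (rule tendsto_inner)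
      then show "w \<bullet> e \<le> 0" using ev by (rule tendsto_upperbound) simp
    qed
  qed
  show ?thesis using P1 P2 by blast
qed


end
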